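(* Let $\mathcal{C}_1,\mathcal{C}_2,\mathcal{C}_3$ be pairwise disjoint maximal commuting classes of two-qubit Pauli operators ($d=4$), and suppose there is a maximal commuting class $\mathcal{S}$ consisting of one element from each of $\mathcal{C}_1$, $\mathcal{C}_2$, $\mathcal{C}_3$. Let $\mathcal{B}_i$ be the common eigenbasis of $\mathcal{C}_i$. Then every common eigenstate $|\psi\rangle$ of the operators in $\mathcal{S}$ saturates the uncertainty relation $\frac13\sum_{i=1}^3 H_2(\mathcal{B}_i\,\|\,|\psi\rangle)\ge 1$, i.e. $\frac13\sum_{i=1}^3 H_2(\mathcal{B}_i\,\|\,|\psi\rangle)= 1$.
   Context: Two-qubit Pauli operators are the tensor products $P_1\otimes P_2$ with $P_k\in\{I,X,Y,Z\}$. A maximal commuting class in $d=4$ is a set of $3$ mutually commuting non-identity two-qubit Pauli operators; its common eigenbasis is an orthonormal basis of $\mathbb{C}^4$. For an orthonormal basis $\mathcal{B}=\{|b^{(j)}\rangle\}_{j=1}^d$ and a unit vector $|\psi\rangle$, the collision entropy is $H_2(\mathcal{B}\,\|\,|\psi\rangle)=-\log_2\sum_{j=1}^d|\langle b^{(j)}|\psi\rangle|^4$. *)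

theory Defs
  imports "Jordan_Normal_Form.Matrix" Complex_Main
begin

(* Single-qubit Pauli matrices, encoded 0 = I, 1 = X, 2 = Y, 3 = Z *)
definition pauli1 :: "nat \<Rightarrow> complex mat" where
  "pauli1 k = (if k = 0 then mat_of_rows_list 2 [[1, 0], [0, 1]]
               else if k = 1 then mat_of_rows_list 2 [[0, 1], [1, 0]]
               else if k = 2 then mat_of_rows_list 2 [[0, -\<i>], [\<i>, 0]]
               else mat_of_rows_list 2 [[1, 0], [0, -1]])"

(* Two-qubit Pauli operator P_a \<otimes> P_b (Kronecker product, first factor = first qubit) *)
definition pauli2 :: "nat \<times> nat \<Rightarrow> complex mat" where
  "pauli2 p = mat 4 4 (\<lambda>(i, j). pauli1 (fst p) $$ (i div 2, j div 2) * pauli1 (snd p) $$ (i mod 2, j mod 2))"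

definition nonid_pauli_labels :: "(nat \<times> nat) set" where
  "nonid_pauli_labels = ({0..3} \<times> {0..3}) - {(0, 0)}"

definition max_commuting_class :: "(nat \<times> nat) set \<Rightarrow> bool" where
  "max_commuting_class C \<longleftrightarrow> C \<subseteq> nonid_pauli_labels \<and> card C = 3 \<and>
     (\<forall>p\<in>C. \<forall>q\<in>C. pauli2 p * pauli2 q = pauli2 q * pauli2 p)"

definition braket :: "complex vec \<Rightarrow> complex vec \<Rightarrow> complex" where
  "braket b \<psi> = (\<Sum>i<dim_vec \<psi>. cnj (b $ i) * \<psi> $ i)"

definition unit_vec4 :: "complex vec \<Rightarrow> bool" where
  "unit_vec4 \<psi> \<longleftrightarrow> \<psi> \<in> carrier_vec 4 \<and> braket \<psi> \<psi> = 1"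

definition orthonormal_basis4 :: "(nat \<Rightarrow> complex vec) \<Rightarrow> bool" where
  "orthonormal_basis4 b \<longleftrightarrow> (\<forall>j<4. b j \<in> carrier_vec 4) \<and>
     (\<forall>j<4. \<forall>k<4. braket (b j) (b k) = (if j = k then 1 else 0))"

definition eigenvector_of :: "complex mat \<Rightarrow> complex vec \<Rightarrow> bool" where
  "eigenvector_of A v \<longleftrightarrow> v \<noteq> 0\<^sub>v (dim_vec v) \<and> (\<exists>c. A *\<^sub>v v = c \<cdot>\<^sub>v v)"

definition common_eigenbasis :: "(nat \<times> nat) set \<Rightarrow> (nat \<Rightarrow> complex vec) \<Rightarrow> bool" where
  "common_eigenbasis C b \<longleftrightarrow> orthonormal_basis4 b \<and> (\<forall>j<4. \<forall>p\<in>C. eigenvector_of (pauli2 p) (b j))"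

definition collision_entropy :: "(nat \<Rightarrow> complex vec) \<Rightarrow> complex vec \<Rightarrow> real" where
  "collision_entropy b \<psi> = - log 2 (\<Sum>j<4. (cmod (braket (b j) \<psi>)) ^ 4)"

end

theory Submission
  imports Defs "Jordan_Normal_Form.Determinant"
begin

definition tr :: "complex mat \<Rightarrow> complex" where "tr A = (\<Sum>i<dim_row A. A $$ (i,i))"
lemma sum2: "(\<Sum>i<2. f i) = f 0 + f (1::nat)" by (simp add: eval_nat_numeral)
lemma less2: "(i::nat) < 2 \<longleftrightarrow> i = 0 \<or> i = 1" by auto
definition p1 :: "nat \<Rightarrow> nat \<Rightarrow> nat \<Rightarrow> complex" where
 "p1 k i j = (if k = 0 then (if i = j then 1 else 0)
   else if k = 1 then (if i = j then 0 else 1)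
   else if k = 2 then (if i = j then 0 else if i = 0 then -\<i> else \<i>)
   else (if i = j then (if i = 0 then 1 else -1) else 0))"
lemma P1m: "pauli1 k = mat 2 2 (\<lambda>(i,j). p1 k i j)"
  by (rule eq_matI) (auto simp: pauli1_def p1_def less2 mat_of_rows_list_def)
lemma M2mult: "mat 2 2 f * mat 2 2 g = mat 2 2 (\<lambda>(i,j). f (i,0) * g (0,j) + f (i,1) * g (1,j))"
  by (rule eq_matI) (auto simp: scalar_prod_def numeral_2_eq_2 row_def col_def)
lemma M2smult: "c \<cdot>\<^sub>m mat 2 2 f = mat 2 2 (\<lambda>ij. c * f ij)"
  by (rule eq_matI) auto
lemma M2eq: "(\<And>i j. i < 2 \<Longrightarrow> j < 2 \<Longrightarrow> f (i,j) = g (i,j)) \<Longrightarrow> mat 2 2 f = mat 2 2 g"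
  by (rule eq_matI) auto
definition ac1 :: "nat \<Rightarrow> nat \<Rightarrow> bool" where "ac1 a b = (a \<noteq> 0 \<and> b \<noteq> 0 \<and> a \<noteq> b)"
lemma le3: "(a::nat) \<le> 3 \<longleftrightarrow> a = 0 \<or> a = 1 \<or> a = 2 \<or> a = 3" by auto
lemma P1comm: assumes "a \<le> 3" "b \<le> 3"
  shows "pauli1 a * pauli1 b = (if ac1 a b then -1 else 1) \<cdot>\<^sub>m (pauli1 b * pauli1 a)"
  unfolding P1m M2mult M2smult
  apply (rule M2eq)
  using assms unfolding le3 less2
  by (elim disjE; simp add: p1_def ac1_def)

lemma one2: "1\<^sub>m 2 = mat 2 2 (\<lambda>(i,j). if i = j then 1 else 0)"
  by (rule eq_matI) auto
lemma P1sq: "pauli1 a * pauli1 a = 1\<^sub>m 2"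
  unfolding P1m M2mult one2
  apply (rule M2eq)
  unfolding less2
  by (cases "a = 0 \<or> a = 1 \<or> a = 2"; auto simp: p1_def)
lemma P1herm: "i < 2 \<Longrightarrow> j < 2 \<Longrightarrow> pauli1 k $$ (j,i) = cnj (pauli1 k $$ (i,j))"
  unfolding P1m less2 by (auto simp: p1_def)
lemma tr2: "tr (mat 2 2 f) = f (0,0) + f (1,1)"
  by (simp add: tr_def sum2)
lemma P1tr2: assumes "a \<le> 3" "b \<le> 3"
  shows "tr (pauli1 a * pauli1 b) = (if a = b then 2 else 0)"
  unfolding P1m M2mult tr2
  using assms unfolding le3
  by (elim disjE; simp add: p1_def)
lemma P1tr: assumes "a \<le> 3" shows "tr (pauli1 a) = (if a = 0 then 2 else 0)"
  unfolding P1m tr2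
  using assms unfolding le3
  by (elim disjE; simp add: p1_def)
lemma P1c: "pauli1 k \<in> carrier_mat 2 2" unfolding P1m by auto

definition K :: "complex mat \<Rightarrow> complex mat \<Rightarrow> complex mat" where
  "K A B = mat 4 4 (\<lambda>(i,j). A $$ (i div 2, j div 2) * B $$ (i mod 2, j mod 2))"
lemma P2K: "pauli2 p = K (pauli1 (fst p)) (pauli1 (snd p))"
  unfolding pauli2_def K_def ..
lemma less4: "(i::nat) < 4 \<longleftrightarrow> i = 0 \<or> i = 1 \<or> i = 2 \<or> i = 3" by auto
lemma sum4: "(\<Sum>i<4. f i) = f 0 + f 1 + f 2 + f (3::nat)" by (simp add: eval_nat_numeral)
lemma KK: assumes "A \<in> carrier_mat 2 2" "B \<in> carrier_mat 2 2" "C \<in> carrier_mat 2 2" "D \<in> carrier_mat 2 2"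
  shows "K A B * K C D = K (A * C) (B * D)"
proof (rule eq_matI)
  fix i j assume "i < dim_row (K (A * C) (B * D))" "j < dim_col (K (A * C) (B * D))"
  hence ij: "i < 4" "j < 4" by (auto simp: K_def)
  have e: "(K A B * K C D) $$ (i,j) = (\<Sum>k<4. K A B $$ (i,k) * K C D $$ (k,j))"
    using ij by (simp add: K_def scalar_prod_def row_def col_def lessThan_atLeast0)
  have f: "K (A * C) (B * D) $$ (i,j) = (\<Sum>k<2. A $$ (i div 2, k) * C $$ (k, j div 2)) * (\<Sum>k<2. B $$ (i mod 2, k) * D $$ (k, j mod 2))"
    using ij assms by (simp add: K_def scalar_prod_def row_def col_def lessThan_atLeast0)
  show "(K A B * K C D) $$ (i,j) = K (A * C) (B * D) $$ (i,j)"
    unfolding e f sum4 sum2 using ij by (simp add: K_def algebra_simps)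
qed (auto simp: K_def)
lemma Ksmult: "K (a \<cdot>\<^sub>m A) (b \<cdot>\<^sub>m B) = (a * b) \<cdot>\<^sub>m K A B"
  if "A \<in> carrier_mat 2 2" "B \<in> carrier_mat 2 2"
  using that by (intro eq_matI) (auto simp: K_def less4)
lemma K1: "K (1\<^sub>m 2) (1\<^sub>m 2) = 1\<^sub>m 4"
  by (rule eq_matI) (auto simp: K_def less4)
lemma Ktr: assumes "A \<in> carrier_mat 2 2" "B \<in> carrier_mat 2 2"
  shows "tr (K A B) = tr A * tr B"
  using assms by (simp add: tr_def K_def sum4 sum2 algebra_simps carrier_matD)
lemma Kc: "K A B \<in> carrier_mat 4 4" by (simp add: K_def)

definition symc :: "nat \<times> nat \<Rightarrow> nat \<times> nat \<Rightarrow> bool" where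
  "symc p q = (ac1 (fst p) (fst q) = ac1 (snd p) (snd q))"
lemma P2c: "pauli2 p \<in> carrier_mat 4 4" by (simp add: P2K Kc)
lemma P2d[simp]: "dim_row (pauli2 p) = 4" "dim_col (pauli2 p) = 4" using P2c[of p] by auto
lemma P2sq: "pauli2 p * pauli2 p = 1\<^sub>m 4"
  by (simp add: P2K KK P1c P1sq K1)
lemma P2comm: assumes "fst p \<le> 3" "snd p \<le> 3" "fst q \<le> 3" "snd q \<le> 3"
  shows "pauli2 p * pauli2 q = (if symc p q then 1 else -1) \<cdot>\<^sub>m (pauli2 q * pauli2 p)"
proof -
  have c: "pauli1 (fst q) * pauli1 (fst p) \<in> carrier_mat 2 2" "pauli1 (snd q) * pauli1 (snd p) \<in> carrier_mat 2 2"
    using mult_carrier_mat[OF P1c P1c] by auto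
  show ?thesis
  unfolding P2K using assms
  by (simp add: KK P1c P1comm[of "fst p" "fst q"] P1comm[of "snd p" "snd q"] Ksmult[OF c] symc_def)
qed
lemma P2tr2: assumes "fst p \<le> 3" "snd p \<le> 3" "fst q \<le> 3" "snd q \<le> 3"
  shows "tr (pauli2 p * pauli2 q) = (if p = q then 4 else 0)"
  unfolding P2K using assms
  by (auto simp: KK P1c Ktr[OF mult_carrier_mat[OF P1c P1c] mult_carrier_mat[OF P1c P1c]] P1tr2 prod_eq_iff)
lemma P2tr: assumes "fst p \<le> 3" "snd p \<le> 3" "p \<noteq> (0,0)"
  shows "tr (pauli2 p) = 0"
  unfolding P2K using assms
  by (cases p) (auto simp: P1c Ktr P1tr)
lemma P2herm: "i < 4 \<Longrightarrow> j < 4 \<Longrightarrow> pauli2 p $$ (j,i) = cnj (pauli2 p $$ (i,j))"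
  unfolding P2K K_def P1m less4 by (auto simp: p1_def)


lemma ob_carrier: "orthonormal_basis4 b \<Longrightarrow> j < 4 \<Longrightarrow> b j \<in> carrier_vec 4"
  unfolding orthonormal_basis4_def by auto

lemma completeness:
  assumes ob: "orthonormal_basis4 b" and i: "i < 4" and k: "k < 4"
  shows "(\<Sum>j<4. b j $ i * cnj (b j $ k)) = (if i = k then 1 else 0)"
proof -
  define U where "U = mat 4 4 (\<lambda>(j,i). cnj (b j $ i))"
  define V where "V = mat 4 4 (\<lambda>(i,j). b j $ i)"
  have U: "U \<in> carrier_mat 4 4" and V: "V \<in> carrier_mat 4 4" unfolding U_def V_def by auto
  have "U * V = 1\<^sub>m 4"
  proof (rule eq_matI)
    fix j k assume "j < dim_row (1\<^sub>m 4 :: complex mat)" "k < dim_col (1\<^sub>m 4 :: complex mat)"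
    hence jk: "j < 4" "k < 4" by auto
    have "(U * V) $$ (j,k) = (\<Sum>i<4. cnj (b j $ i) * b k $ i)"
      using jk unfolding U_def V_def by (simp add: scalar_prod_def row_def col_def lessThan_atLeast0)
    also have "\<dots> = braket (b j) (b k)"
      unfolding braket_def using ob_carrier[OF ob jk(2)] by simp
    also have "\<dots> = 1\<^sub>m 4 $$ (j,k)" using ob jk unfolding orthonormal_basis4_def by simp
    finally show "(U * V) $$ (j,k) = 1\<^sub>m 4 $$ (j,k)" .
  qed (auto simp: U_def V_def)
  hence VU: "V * U = 1\<^sub>m 4" using mat_mult_left_right_inverse[OF U V] by simp
  have "(V * U) $$ (i,k) = (\<Sum>j<4. b j $ i * cnj (b j $ k))"
    using i k unfolding U_def V_def by (simp add: scalar_prod_def row_def col_def lessThan_atLeast0)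
  thus ?thesis using VU i k by simp
qed

lemma mv4: "X \<in> carrier_mat 4 4 \<Longrightarrow> v \<in> carrier_vec 4 \<Longrightarrow> i < 4 \<Longrightarrow> (X *\<^sub>v v) $ i = (\<Sum>k<4. X $$ (i,k) * v $ k)"
  by (simp add: scalar_prod_def row_def lessThan_atLeast0)

lemma braket4: "w \<in> carrier_vec 4 \<Longrightarrow> braket v w = (\<Sum>i<4. cnj (v $ i) * w $ i)"
  unfolding braket_def by simp

lemma swap3: "(\<Sum>j\<in>A. \<Sum>k\<in>B. \<Sum>i\<in>C. f j k i) = (\<Sum>k\<in>B. \<Sum>i\<in>C. \<Sum>j\<in>A. f j k i)"
proof -
  have "(\<Sum>j\<in>A. \<Sum>k\<in>B. \<Sum>i\<in>C. f j k i) = (\<Sum>k\<in>B. \<Sum>j\<in>A. \<Sum>i\<in>C. f j k i)" by (rule sum.swap)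
  also have "\<dots> = (\<Sum>k\<in>B. \<Sum>i\<in>C. \<Sum>j\<in>A. f j k i)" by (rule sum.cong[OF refl], rule sum.swap)
  finally show ?thesis .
qed

lemma delta_sum: "(\<Sum>k<(4::nat). c k * (if i = k then 1 else 0)) = (if i < 4 then c i else (0::complex))"
proof -
  have "(\<Sum>k<(4::nat). c k * (if i = k then 1 else 0)) = (\<Sum>k<4. if i = k then c k else 0)"
    by (intro sum.cong) auto
  thus ?thesis by (simp add: sum.delta)
qed

lemma parseval:
  assumes ob: "orthonormal_basis4 b" and v: "v \<in> carrier_vec 4" and w: "w \<in> carrier_vec 4"
  shows "braket v w = (\<Sum>j<4. cnj (braket (b j) v) * braket (b j) w)"
proof -
  have "(\<Sum>j<4. cnj (braket (b j) v) * braket (b j) w)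
      = (\<Sum>j<4. (\<Sum>i<4. b j $ i * cnj (v $ i)) * (\<Sum>k<4. cnj (b j $ k) * w $ k))"
    using v w by (simp add: braket4)
  also have "\<dots> = (\<Sum>j<4. \<Sum>i<4. \<Sum>k<4. cnj (v $ i) * w $ k * (b j $ i * cnj (b j $ k)))"
    unfolding sum_product by (intro sum.cong refl) (simp add: algebra_simps)
  also have "\<dots> = (\<Sum>i<4. \<Sum>k<4. \<Sum>j<4. cnj (v $ i) * w $ k * (b j $ i * cnj (b j $ k)))"
    by (rule swap3)
  also have "\<dots> = (\<Sum>i<4. \<Sum>k<4. cnj (v $ i) * w $ k * (\<Sum>j<4. b j $ i * cnj (b j $ k)))"
    by (simp add: sum_distrib_left)
  also have "\<dots> = (\<Sum>i<4. \<Sum>k<4. cnj (v $ i) * w $ k * (if i = k then 1 else 0))"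
    by (intro sum.cong refl) (simp add: completeness[OF ob])
  also have "\<dots> = (\<Sum>i<4. cnj (v $ i) * w $ i)"
    by (intro sum.cong refl) (simp only: delta_sum, simp)
  finally show ?thesis using w by (simp add: braket4)
qed

lemma trace_basis:
  assumes ob: "orthonormal_basis4 b" and X: "X \<in> carrier_mat 4 4"
  shows "(\<Sum>j<4. braket (b j) (X *\<^sub>v b j)) = (\<Sum>i<4. X $$ (i,i))"
proof -
  have "(\<Sum>j<4. braket (b j) (X *\<^sub>v b j)) = (\<Sum>j<4. \<Sum>i<4. cnj (b j $ i) * (\<Sum>k<4. X $$ (i,k) * b j $ k))"
    using X ob_carrier[OF ob] by (intro sum.cong refl) (simp add: braket4 mv4 del: index_mult_mat_vec)
  also have "\<dots> = (\<Sum>j<4. \<Sum>i<4. \<Sum>k<4. X $$ (i,k) * (b j $ k * cnj (b j $ i)))"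
    unfolding sum_distrib_left by (intro sum.cong refl) (simp add: algebra_simps)
  also have "\<dots> = (\<Sum>i<4. \<Sum>k<4. \<Sum>j<4. X $$ (i,k) * (b j $ k * cnj (b j $ i)))"
    by (rule swap3)
  also have "\<dots> = (\<Sum>i<4. \<Sum>k<4. X $$ (i,k) * (\<Sum>j<4. b j $ k * cnj (b j $ i)))"
    by (simp add: sum_distrib_left)
  also have "\<dots> = (\<Sum>i<4. \<Sum>k<4. X $$ (i,k) * (if i = k then 1 else 0))"
    by (intro sum.cong refl) (auto simp: completeness[OF ob])
  also have "\<dots> = (\<Sum>i<4. X $$ (i,i))"
    by (intro sum.cong refl) (simp only: delta_sum, simp)
  finally show ?thesis .
qed

definition herm4 :: "complex mat \<Rightarrow> bool" where
  "herm4 X \<longleftrightarrow> X \<in> carrier_mat 4 4 \<and> (\<forall>i<4. \<forall>j<4. X $$ (j,i) = cnj (X $$ (i,j)))"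

lemma herm_braket:
  assumes h: "herm4 X" and b: "b \<in> carrier_vec 4" and v: "v \<in> carrier_vec 4"
  shows "braket (X *\<^sub>v b) v = braket b (X *\<^sub>v v)"
proof -
  have X: "X \<in> carrier_mat 4 4" using h herm4_def by auto
  have "braket (X *\<^sub>v b) v = (\<Sum>i<4. \<Sum>k<4. cnj (X $$ (i,k)) * cnj (b $ k) * v $ i)"
    using X b v by (simp add: braket4 mv4 sum_distrib_right del: index_mult_mat_vec)
  also have "\<dots> = (\<Sum>i<4. \<Sum>k<4. X $$ (k,i) * cnj (b $ k) * v $ i)"
  proof (rule sum.cong[OF refl], rule sum.cong[OF refl])
    fix i k assume "i \<in> {..<4::nat}" "k \<in> {..<4::nat}"
    hence "X $$ (k,i) = cnj (X $$ (i,k))" using h unfolding herm4_def by blast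
    thus "cnj (X $$ (i,k)) * cnj (b $ k) * v $ i = X $$ (k,i) * cnj (b $ k) * v $ i" by simp
  qed
  also have "\<dots> = (\<Sum>k<4. \<Sum>i<4. cnj (b $ k) * (X $$ (k,i) * v $ i))"
    by (subst sum.swap) (simp add: algebra_simps)
  also have "\<dots> = braket b (X *\<^sub>v v)"
    using X b v by (simp add: braket4 mv4 sum_distrib_left del: index_mult_mat_vec)
  finally show ?thesis .
qed

lemma braket_smult_l: "b \<in> carrier_vec 4 \<Longrightarrow> v \<in> carrier_vec 4 \<Longrightarrow> braket (a \<cdot>\<^sub>v b) v = cnj a * braket b v"
  unfolding braket_def by (simp add: sum_distrib_left algebra_simps)
lemma braket_smult_r: "braket b (a \<cdot>\<^sub>v v) = a * braket b v"
  unfolding braket_def by (simp add: sum_distrib_left algebra_simps)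

lemma eig_pm:
  assumes X: "(X :: complex mat) \<in> carrier_mat 4 4" and XX: "X * X = 1\<^sub>m 4" and v: "v \<in> carrier_vec 4"
    and nz: "v \<noteq> 0\<^sub>v 4" and e: "X *\<^sub>v v = m \<cdot>\<^sub>v v"
  shows "m = 1 \<or> m = -1"
proof -
  have "v = (X * X) *\<^sub>v v" using XX one_mult_mat_vec[OF v] by simp
  also have "\<dots> = X *\<^sub>v (X *\<^sub>v v)" using X v by (simp add: assoc_mult_mat_vec)
  also have "\<dots> = X *\<^sub>v (m \<cdot>\<^sub>v v)" using e by simp
  also have "\<dots> = m \<cdot>\<^sub>v (X *\<^sub>v v)" by (rule mult_mat_vec[OF X v])
  also have "\<dots> = (m * m) \<cdot>\<^sub>v v" using e by (simp add: smult_smult_assoc)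
  finally have vv: "v = (m * m) \<cdot>\<^sub>v v" .
  have "\<exists>i<4. v $ i \<noteq> 0"
  proof (rule ccontr)
    assume "\<not> (\<exists>i<4. v $ i \<noteq> 0)"
    hence "v = 0\<^sub>v 4" using v by (intro eq_vecI) auto
    thus False using nz by simp
  qed
  then obtain i where i: "i < 4" "v $ i \<noteq> 0" by blast
  have "v $ i = m * m * v $ i" using arg_cong[OF vv, of "\<lambda>w. w $ i"] i v by simp
  hence "m * m = 1" using i by simp
  thus ?thesis using square_eq_1_iff by blast
qed

lemma overlap0:
  assumes h: "herm4 X" and b: "b \<in> carrier_vec 4" and v: "v \<in> carrier_vec 4"
    and eb: "X *\<^sub>v b = m \<cdot>\<^sub>v b" and ev: "X *\<^sub>v v = l \<cdot>\<^sub>v v" and m: "m = 1 \<or> m = -1" and ml: "m \<noteq> l"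
  shows "braket b v = 0"
proof -
  have "cnj m * braket b v = l * braket b v"
    using herm_braket[OF h b v] eb ev b v by (simp add: braket_smult_l braket_smult_r)
  moreover have "cnj m = m" using m by auto
  ultimately have "(m - l) * braket b v = 0" by (simp add: algebra_simps)
  thus ?thesis using ml by simp
qed


lemma smult_mat_vec: "(A :: complex mat) \<in> carrier_mat 4 4 \<Longrightarrow> v \<in> carrier_vec 4 \<Longrightarrow> (k \<cdot>\<^sub>m A) *\<^sub>v v = k \<cdot>\<^sub>v (A *\<^sub>v v)"
  by (intro eq_vecI) (auto simp: scalar_prod_def sum_distrib_left algebra_simps)


lemma exactly_one:
  assumes "(\<Sum>j<(4::nat). (if P j then (4::complex) else 0)) = 4"
  shows "\<exists>j<4. P j \<and> (\<forall>k<4. P k \<longrightarrow> k = j)"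
  using assms unfolding sum4 less4
  by (cases "P 0"; cases "P 1"; cases "P 2"; cases "P 3") auto

lemma sum_single:
  assumes "(j::nat) < 4" "\<forall>k<4. k \<noteq> j \<longrightarrow> f k = (0::'a::comm_monoid_add)"
  shows "(\<Sum>k<4. f k) = f j"
proof -
  have "(\<Sum>k<4. f k) = f j + (\<Sum>k\<in>{..<4} - {j}. f k)"
    using assms(1) by (simp add: sum.remove)
  also have "(\<Sum>k\<in>{..<4} - {j}. f k) = 0" using assms(2) by (intro sum.neutral) auto
  finally show ?thesis by simp
qed

lemma sum_two:
  assumes "(j1::nat) < 4" "j2 < 4" "j1 \<noteq> j2" "\<forall>k<4. k \<noteq> j1 \<and> k \<noteq> j2 \<longrightarrow> f k = (0::'a::comm_monoid_add)"
  shows "(\<Sum>k<4. f k) = f j1 + f j2"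
proof -
  have "(\<Sum>k<4. f k) = f j1 + (\<Sum>k\<in>{..<4} - {j1}. f k)"
    using assms(1) by (simp add: sum.remove)
  also have "(\<Sum>k\<in>{..<4} - {j1}. f k) = f j2 + (\<Sum>k\<in>{..<4} - {j1} - {j2}. f k)"
    using assms(2,3) by (intro sum.remove) auto
  also have "(\<Sum>k\<in>{..<4} - {j1} - {j2}. f k) = 0" using assms(4) by (intro sum.neutral) auto
  finally show ?thesis by simp
qed

lemma cnj_sq: "cnj z * z = complex_of_real ((cmod z)^2)"
  by (metis complex_norm_square mult.commute)

lemma eig_obtain:
  assumes "eigenvector_of A v" "v \<in> carrier_vec 4"
  shows "v \<noteq> 0\<^sub>v 4" "\<exists>m. A *\<^sub>v v = m \<cdot>\<^sub>v v"
  using assms unfolding eigenvector_of_def by auto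

lemma mainM:
  fixes s c t :: "complex mat" and b :: "nat \<Rightarrow> complex vec" and \<psi> :: "complex vec"
  assumes hs: "herm4 s" and hc: "herm4 c" and ht: "herm4 t"
    and ss: "s * s = 1\<^sub>m 4" and cc: "c * c = 1\<^sub>m 4" and tt: "t * t = 1\<^sub>m 4"
    and st: "s * t = t * s" and ct: "c * t = (-1) \<cdot>\<^sub>m (t * c)"
    and trs: "(\<Sum>i<4. s $$ (i,i)) = 0" and trc: "(\<Sum>i<4. c $$ (i,i)) = 0"
    and trsc: "(\<Sum>i<4. (s * c) $$ (i,i)) = 0"
    and ob: "orthonormal_basis4 b"
    and eb: "\<forall>j<4. eigenvector_of s (b j) \<and> eigenvector_of c (b j)"
    and u: "unit_vec4 \<psi>" and es: "eigenvector_of s \<psi>" and et: "eigenvector_of t \<psi>"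
  shows "(\<Sum>j<4. (cmod (braket (b j) \<psi>)) ^ 4) = 1/2"
proof -
  have sC: "s \<in> carrier_mat 4 4" using hs herm4_def by auto
  have cC: "c \<in> carrier_mat 4 4" using hc herm4_def by auto
  have tC: "t \<in> carrier_mat 4 4" using ht herm4_def by auto
  have bC: "\<And>j. j < 4 \<Longrightarrow> b j \<in> carrier_vec 4" using ob_carrier[OF ob] .
  have pC: "\<psi> \<in> carrier_vec 4" using u unit_vec4_def by auto
  have bb: "\<And>j. j < 4 \<Longrightarrow> braket (b j) (b j) = 1" using ob orthonormal_basis4_def by auto
  have "\<forall>j\<in>{..<4}. \<exists>m. s *\<^sub>v b j = m \<cdot>\<^sub>v b j" using eb eig_obtain bC by blast
  then obtain \<mu> where \<mu>: "\<forall>j\<in>{..<4}. s *\<^sub>v b j = \<mu> j \<cdot>\<^sub>v b j" by (metis bchoice)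
  have "\<forall>j\<in>{..<4}. \<exists>m. c *\<^sub>v b j = m \<cdot>\<^sub>v b j" using eb eig_obtain bC by blast
  then obtain \<nu> where \<nu>: "\<forall>j\<in>{..<4}. c *\<^sub>v b j = \<nu> j \<cdot>\<^sub>v b j" by (metis bchoice)
  have sb: "\<And>j. j < 4 \<Longrightarrow> s *\<^sub>v b j = \<mu> j \<cdot>\<^sub>v b j" using \<mu> by auto
  have cb: "\<And>j. j < 4 \<Longrightarrow> c *\<^sub>v b j = \<nu> j \<cdot>\<^sub>v b j" using \<nu> by auto
  have bnz: "\<And>j. j < 4 \<Longrightarrow> b j \<noteq> 0\<^sub>v 4" using eb eig_obtain bC by blast
  have \<mu>pm: "\<And>j. j < 4 \<Longrightarrow> \<mu> j = 1 \<or> \<mu> j = -1"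
    using eig_pm[OF sC ss bC bnz sb] .
  have \<nu>pm: "\<And>j. j < 4 \<Longrightarrow> \<nu> j = 1 \<or> \<nu> j = -1"
    using eig_pm[OF cC cc bC bnz cb] .
  obtain l where sp: "s *\<^sub>v \<psi> = l \<cdot>\<^sub>v \<psi>" using eig_obtain[OF es pC] by blast
  obtain \<tau> where tp: "t *\<^sub>v \<psi> = \<tau> \<cdot>\<^sub>v \<psi>" using eig_obtain[OF et pC] by blast
  have pnz: "\<psi> \<noteq> 0\<^sub>v 4" using eig_obtain[OF es pC] by blast
  have lpm: "l = 1 \<or> l = -1" using eig_pm[OF sC ss pC pnz sp] .
  have \<tau>pm: "\<tau> = 1 \<or> \<tau> = -1" using eig_pm[OF tC tt pC pnz tp] .
  define q where "q j = braket (b j) \<psi>" for j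
  have Z: "\<And>j. j < 4 \<Longrightarrow> \<mu> j \<noteq> l \<Longrightarrow> q j = 0"
    unfolding q_def using overlap0[OF hs bC pC sb sp \<mu>pm] by blast
  have T1: "(\<Sum>j<4. \<mu> j) = 0"
  proof -
    have "(\<Sum>j<4. \<mu> j) = (\<Sum>j<4. braket (b j) (s *\<^sub>v b j))"
      by (intro sum.cong refl) (simp add: sb bb braket_smult_r)
    also have "\<dots> = 0" using trace_basis[OF ob sC] trs by simp
    finally show ?thesis .
  qed
  have T2: "(\<Sum>j<4. \<nu> j) = 0"
  proof -
    have "(\<Sum>j<4. \<nu> j) = (\<Sum>j<4. braket (b j) (c *\<^sub>v b j))"
      by (intro sum.cong refl) (simp add: cb bb braket_smult_r)
    also have "\<dots> = 0" using trace_basis[OF ob cC] trc by simp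
    finally show ?thesis .
  qed
  have T3: "(\<Sum>j<4. \<mu> j * \<nu> j) = 0"
  proof -
    have "(\<Sum>j<4. \<mu> j * \<nu> j) = (\<Sum>j<4. braket (b j) ((s * c) *\<^sub>v b j))"
    proof (intro sum.cong refl)
      fix j assume "j \<in> {..<4::nat}"
      hence j: "j < 4" by simp
      have "(s * c) *\<^sub>v b j = s *\<^sub>v (c *\<^sub>v b j)" using sC cC bC[OF j] by (simp add: assoc_mult_mat_vec)
      also have "\<dots> = \<nu> j \<cdot>\<^sub>v (s *\<^sub>v b j)" using cb[OF j] mult_mat_vec[OF sC bC[OF j]] by simp
      also have "\<dots> = (\<nu> j * \<mu> j) \<cdot>\<^sub>v b j" using sb[OF j] by (simp add: smult_smult_assoc)
      finally show "\<mu> j * \<nu> j = braket (b j) ((s * c) *\<^sub>v b j)"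
        using bb[OF j] by (simp add: braket_smult_r)
    qed
    also have "\<dots> = 0" using trace_basis[OF ob mult_carrier_mat[OF sC cC]] trsc by simp
    finally show ?thesis .
  qed
  have uniq: "\<exists>j<4. (\<mu> j = m \<and> \<nu> j = n) \<and> (\<forall>k<4. (\<mu> k = m \<and> \<nu> k = n) \<longrightarrow> k = j)"
    if mn: "m = 1 \<or> m = -1" "n = 1 \<or> n = -1" for m n
  proof (rule exactly_one)
    have "(\<Sum>j<4. (if \<mu> j = m \<and> \<nu> j = n then (4::complex) else 0)) = (\<Sum>j<4. (1 + m * \<mu> j) * (1 + n * \<nu> j))"
    proof (intro sum.cong refl)
      fix j assume "j \<in> {..<4::nat}"
      hence j: "j < 4" by simp
      show "(if \<mu> j = m \<and> \<nu> j = n then (4::complex) else 0) = (1 + m * \<mu> j) * (1 + n * \<nu> j)"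
        using \<mu>pm[OF j] \<nu>pm[OF j] mn by auto
    qed
    also have "\<dots> = 4 + m * (\<Sum>j<4. \<mu> j) + n * (\<Sum>j<4. \<nu> j) + m * n * (\<Sum>j<4. \<mu> j * \<nu> j)"
      unfolding sum4 by (simp add: algebra_simps)
    also have "\<dots> = 4" using T1 T2 T3 by simp
    finally show "(\<Sum>j<4. (if \<mu> j = m \<and> \<nu> j = n then (4::complex) else 0)) = 4" .
  qed
  obtain jp where jp: "jp < 4" "\<mu> jp = l" "\<nu> jp = 1" "\<forall>k<4. (\<mu> k = l \<and> \<nu> k = 1) \<longrightarrow> k = jp"
    using uniq[OF lpm, of 1] by blast
  obtain jm where jm: "jm < 4" "\<mu> jm = l" "\<nu> jm = -1" "\<forall>k<4. (\<mu> k = l \<and> \<nu> k = -1) \<longrightarrow> k = jm"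
    using uniq[OF lpm, of "-1"] by blast
  have jpm: "jp \<noteq> jm" using jp(3) jm(3) by force
  have others: "\<forall>k<4. k \<noteq> jp \<and> k \<noteq> jm \<longrightarrow> q k = 0"
  proof (intro allI impI)
    fix k assume k: "k < 4" "k \<noteq> jp \<and> k \<noteq> jm"
    show "q k = 0"
    proof (cases "\<mu> k = l")
      case True
      have "\<nu> k \<noteq> 1" using True k jp(4) by blast
      moreover have "\<nu> k \<noteq> -1" using True k jm(4) by blast
      ultimately show ?thesis using \<nu>pm[OF k(1)] by blast
    next
      case False
      then show ?thesis using Z k(1) by blast
    qed
  qed
  define tb where "tb = t *\<^sub>v b jp"
  have tbC: "tb \<in> carrier_vec 4" unfolding tb_def using tC bC[OF jp(1)] by simp
  have stb: "s *\<^sub>v tb = l \<cdot>\<^sub>v tb"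
  proof -
    have "s *\<^sub>v tb = (s * t) *\<^sub>v b jp" unfolding tb_def using sC tC bC[OF jp(1)] by (simp add: assoc_mult_mat_vec)
    also have "\<dots> = t *\<^sub>v (s *\<^sub>v b jp)" unfolding st using sC tC bC[OF jp(1)] by (simp add: assoc_mult_mat_vec)
    also have "\<dots> = l \<cdot>\<^sub>v tb" unfolding tb_def using sb[OF jp(1)] jp(2) mult_mat_vec[OF tC bC[OF jp(1)]] by simp
    finally show ?thesis .
  qed
  have ctb: "c *\<^sub>v tb = (-1) \<cdot>\<^sub>v tb"
  proof -
    have "c *\<^sub>v tb = (c * t) *\<^sub>v b jp" unfolding tb_def using cC tC bC[OF jp(1)] by (simp add: assoc_mult_mat_vec)
    also have "\<dots> = (-1) \<cdot>\<^sub>v ((t * c) *\<^sub>v b jp)" unfolding ct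
      using smult_mat_vec[OF mult_carrier_mat[OF tC cC] bC[OF jp(1)]] .
    also have "(t * c) *\<^sub>v b jp = t *\<^sub>v (c *\<^sub>v b jp)" using cC tC bC[OF jp(1)] by (simp add: assoc_mult_mat_vec)
    also have "\<dots> = tb" unfolding tb_def using cb[OF jp(1)] jp(3) by simp
    finally show ?thesis .
  qed
  have tb0: "\<forall>k<4. k \<noteq> jm \<longrightarrow> braket (b k) tb = 0"
  proof (intro allI impI)
    fix k assume k: "k < 4" "k \<noteq> jm"
    show "braket (b k) tb = 0"
    proof (cases "\<mu> k = l")
      case True
      hence "\<nu> k \<noteq> -1" using k jm(4) by blast
      hence "\<nu> k = 1" using \<nu>pm[OF k(1)] by blast
      then show ?thesis using overlap0[OF hc bC[OF k(1)] tbC cb[OF k(1)] ctb] by simp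
    next
      case False
      then show ?thesis using overlap0[OF hs bC[OF k(1)] tbC sb[OF k(1)] stb \<mu>pm[OF k(1)]] by simp
    qed
  qed
  define \<alpha> where "\<alpha> = braket (b jm) tb"
  have "braket tb tb = braket (b jp) (t *\<^sub>v tb)"
    unfolding tb_def using herm_braket[OF ht bC[OF jp(1)] tbC[unfolded tb_def]] .
  also have "t *\<^sub>v tb = (t * t) *\<^sub>v b jp" unfolding tb_def using tC bC[OF jp(1)] by (simp add: assoc_mult_mat_vec)
  also have "\<dots> = b jp" using tt bC[OF jp(1)] by simp
  finally have tbtb: "braket tb tb = 1" using bb[OF jp(1)] by simp
  have "braket tb tb = (\<Sum>k<4. cnj (braket (b k) tb) * braket (b k) tb)"
    using parseval[OF ob tbC tbC] .
  also have "\<dots> = cnj \<alpha> * \<alpha>" unfolding \<alpha>_def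
    by (rule sum_single[OF jm(1)]) (use tb0 in simp)
  finally have "cnj \<alpha> * \<alpha> = 1" using tbtb by simp
  hence "(cmod \<alpha>)^2 = 1" unfolding cnj_sq by (metis of_real_eq_1_iff)
  hence a1: "cmod \<alpha> = 1" using norm_ge_zero[of \<alpha>] by (auto simp: power2_eq_1_iff)
  have "\<tau> * q jp = braket (b jp) (t *\<^sub>v \<psi>)" unfolding q_def tp by (simp add: braket_smult_r)
  also have "\<dots> = braket tb \<psi>" unfolding tb_def using herm_braket[OF ht bC[OF jp(1)] pC] by simp
  also have "\<dots> = (\<Sum>k<4. cnj (braket (b k) tb) * q k)" unfolding q_def using parseval[OF ob tbC pC] .
  also have "\<dots> = cnj \<alpha> * q jm" unfolding \<alpha>_def
    by (rule sum_single[OF jm(1)]) (use tb0 in simp)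
  finally have "\<tau> * q jp = cnj \<alpha> * q jm" .
  hence "cmod (\<tau> * q jp) = cmod (cnj \<alpha> * q jm)" by simp
  hence eqm: "cmod (q jp) = cmod (q jm)" using a1 \<tau>pm by (auto simp: norm_mult)
  have "1 = braket \<psi> \<psi>" using u unit_vec4_def by simp
  also have "\<dots> = (\<Sum>k<4. cnj (q k) * q k)" unfolding q_def using parseval[OF ob pC pC] .
  also have "\<dots> = cnj (q jp) * q jp + cnj (q jm) * q jm"
    by (rule sum_two[OF jp(1) jm(1) jpm]) (use others in simp)
  finally have "1 = complex_of_real ((cmod (q jp))^2 + (cmod (q jm))^2)" unfolding cnj_sq by simp
  hence "(cmod (q jp))^2 + (cmod (q jm))^2 = 1" by (metis of_real_eq_1_iff)
  hence h: "(cmod (q jp))^2 = 1/2" "(cmod (q jm))^2 = 1/2" using eqm by auto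
  have "(\<Sum>j<4. (cmod (q j)) ^ 4) = (cmod (q jp))^4 + (cmod (q jm))^4"
    by (rule sum_two[OF jp(1) jm(1) jpm]) (use others in simp)
  also have "\<dots> = ((cmod (q jp))^2)^2 + ((cmod (q jm))^2)^2" by simp
  also have "\<dots> = 1/2" unfolding h by (simp add: power2_eq_square)
  finally show ?thesis unfolding q_def .
qed
definition x1 :: "nat \<Rightarrow> nat \<Rightarrow> nat" where
  "x1 a b = (if a = 0 then b else if b = 0 then a else if a = b then 0 else 6 - a - b)"
definition mm :: "nat \<times> nat \<Rightarrow> nat \<times> nat \<Rightarrow> nat \<times> nat" where
  "mm p q = (x1 (fst p) (fst q), x1 (snd p) (snd q))"
lemma I4: "{0..3::nat} = {0,1,2,3}" by auto
lemma L15: "({0..3::nat} \<times> {0..3::nat}) - {(0,0)} = {(0,1),(0,2),(0,3),(1,0),(1,1),(1,2),(1,3),(2,0),(2,1),(2,2),(2,3),(3,0),(3,1),(3,2),(3,3)}"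
  unfolding I4 by auto
lemma G: "\<forall>a\<in>({0..3::nat} \<times> {0..3::nat}) - {(0,0)}. \<forall>b\<in>({0..3::nat} \<times> {0..3::nat}) - {(0,0)}. \<forall>c\<in>({0..3::nat} \<times> {0..3::nat}) - {(0,0)}.
   a \<noteq> b \<and> symc a b \<and> symc a c \<and> symc b c \<longrightarrow> c = a \<or> c = b \<or> c = mm a b"
  unfolding L15 by (simp add: symc_def ac1_def mm_def x1_def)

lemma symc_comm: "symc p q = symc q p"
  unfolding symc_def ac1_def by auto

lemma comm_symc:
  assumes "fst p \<le> 3" "snd p \<le> 3" "fst q \<le> 3" "snd q \<le> 3"
    and pq: "pauli2 p * pauli2 q = pauli2 q * pauli2 p"
  shows "symc p q"
proof (rule ccontr)
  assume ns: "\<not> symc p q"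
  define M where "M = pauli2 q * pauli2 p"
  have MC: "M \<in> carrier_mat 4 4" unfolding M_def using P2c mult_carrier_mat by blast
  have "M = (-1) \<cdot>\<^sub>m M" using P2comm[OF assms(1-4)] pq ns unfolding M_def by simp
  hence M0: "M = 0\<^sub>m 4 4"
  proof -
    assume h: "M = (-1) \<cdot>\<^sub>m M"
    show "M = 0\<^sub>m 4 4"
    proof (rule eq_matI)
      fix i j assume ij: "i < dim_row (0\<^sub>m 4 4 :: complex mat)" "j < dim_col (0\<^sub>m 4 4 :: complex mat)"
      have "M $$ (i,j) = ((-1) \<cdot>\<^sub>m M) $$ (i,j)" using h by simp
      hence "M $$ (i,j) = - M $$ (i,j)" using ij MC by simp
      thus "M $$ (i,j) = 0\<^sub>m 4 4 $$ (i,j)" using ij by simp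
    qed (use MC in auto)
  qed
  have PC: "pauli2 p \<in> carrier_mat 4 4" and QC: "pauli2 q \<in> carrier_mat 4 4" using P2c by auto
  have "M * (pauli2 p * pauli2 q) = pauli2 q * (pauli2 p * (pauli2 p * pauli2 q))"
    unfolding M_def by (rule assoc_mult_mat[OF QC PC mult_carrier_mat[OF PC QC]])
  also have "pauli2 p * (pauli2 p * pauli2 q) = (pauli2 p * pauli2 p) * pauli2 q"
    by (rule assoc_mult_mat[OF PC PC QC, symmetric])
  also have "\<dots> = pauli2 q" using QC by (simp add: P2sq)
  also have "pauli2 q * pauli2 q = 1\<^sub>m 4" by (rule P2sq)
  finally have MPQ: "M * (pauli2 p * pauli2 q) = 1\<^sub>m 4" .
  have Z: "(0\<^sub>m 4 4 :: complex mat) * (pauli2 p * pauli2 q) = 0\<^sub>m 4 4"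
    by (rule left_mult_zero_mat[OF mult_carrier_mat[OF PC QC]])
  have "(0\<^sub>m 4 4 :: complex mat) = 1\<^sub>m 4" using MPQ unfolding M0 Z .
  hence "(0\<^sub>m 4 4 :: complex mat) $$ (0,0) = 1\<^sub>m 4 $$ (0,0)" by simp
  thus False by simp
qed

lemma comb:
  assumes SL: "S \<subseteq> nonid_pauli_labels" and S3: "card S = 3"
    and Ssym: "\<forall>p\<in>S. \<forall>q\<in>S. symc p q"
    and cL: "c \<in> nonid_pauli_labels" and cS: "c \<notin> S"
  shows "\<exists>t\<in>S. \<not> symc t c"
proof (rule ccontr)
  assume "\<not> (\<exists>t\<in>S. \<not> symc t c)"
  hence tc: "\<forall>t\<in>S. symc t c" by blast
  obtain a b d where S: "S = {a,b,d}" "a \<noteq> b" "b \<noteq> d" "a \<noteq> d" using S3 card_3_iff by metis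
  have L: "a \<in> nonid_pauli_labels" "b \<in> nonid_pauli_labels" "d \<in> nonid_pauli_labels" using SL S by auto
  have GG: "\<forall>a\<in>nonid_pauli_labels. \<forall>b\<in>nonid_pauli_labels. \<forall>c\<in>nonid_pauli_labels.
   a \<noteq> b \<and> symc a b \<and> symc a c \<and> symc b c \<longrightarrow> c = a \<or> c = b \<or> c = mm a b"
    using G unfolding nonid_pauli_labels_def .
  have "d = mm a b" using GG L S Ssym by blast
  moreover have "c = a \<or> c = b \<or> c = mm a b" using GG L cL S Ssym tc by blast
  ultimately have "c \<in> S" using S by auto
  thus False using cS by simp
qed

lemma label_bounds: "p \<in> nonid_pauli_labels \<Longrightarrow> fst p \<le> 3 \<and> snd p \<le> 3 \<and> p \<noteq> (0,0)"
  unfolding nonid_pauli_labels_def by auto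

lemma herm_P2: "herm4 (pauli2 p)"
  unfolding herm4_def using P2c P2herm by blast

lemma per_class:
  fixes Ci S :: "(nat \<times> nat) set" and b :: "nat \<Rightarrow> complex vec" and \<psi> :: "complex vec"
  assumes Ci: "max_commuting_class Ci" and S_class: "max_commuting_class S"
    and one: "card (S \<inter> Ci) = 1" and bas: "common_eigenbasis Ci b"
    and u: "unit_vec4 \<psi>" and pe: "\<forall>p\<in>S. eigenvector_of (pauli2 p) \<psi>"
  shows "collision_entropy b \<psi> = 1"
proof -
  obtain s where s: "S \<inter> Ci = {s}" using one card_1_singletonE by blast
  have fin: "finite Ci" using Ci unfolding max_commuting_class_def by (metis card.infinite zero_neq_numeral)
  have sCi: "s \<in> Ci" using s by auto
  have "card (Ci - {s}) = 2" using Ci sCi fin unfolding max_commuting_class_def by (simp add: card_Diff_singleton)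
  hence "Ci - {s} \<noteq> {}" by (metis card.empty zero_neq_numeral)
  then obtain c where c: "c \<in> Ci" "c \<noteq> s" by blast
  have cS: "c \<notin> S" using s c by auto
  have sS: "s \<in> S" "s \<in> Ci" using s by auto
  have CL: "Ci \<subseteq> nonid_pauli_labels" and SL: "S \<subseteq> nonid_pauli_labels"
    using Ci S_class unfolding max_commuting_class_def by auto
  have Scomm: "\<forall>p\<in>S. \<forall>q\<in>S. pauli2 p * pauli2 q = pauli2 q * pauli2 p"
    using S_class unfolding max_commuting_class_def by auto
  have Ssym: "\<forall>p\<in>S. \<forall>q\<in>S. symc p q"
    using Scomm SL label_bounds comm_symc by (meson subsetD)
  obtain t where t: "t \<in> S" "\<not> symc t c"
    using comb[OF SL _ Ssym _ cS] S_class CL c(1) unfolding max_commuting_class_def by blast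
  have "s \<in> nonid_pauli_labels" "c \<in> nonid_pauli_labels" "t \<in> nonid_pauli_labels" using CL SL sS c t by auto
  note lb = label_bounds[OF this(1)] label_bounds[OF this(2)] label_bounds[OF this(3)]
  have sb: "fst s \<le> 3" "snd s \<le> 3" "s \<noteq> (0,0)" using lb(1) by blast+
  have cb: "fst c \<le> 3" "snd c \<le> 3" "c \<noteq> (0,0)" using lb(2) by blast+
  have tb: "fst t \<le> 3" "snd t \<le> 3" using lb(3) by blast+
  have ct: "pauli2 c * pauli2 t = (-1) \<cdot>\<^sub>m (pauli2 t * pauli2 c)"
    using P2comm[OF cb(1,2) tb] t(2) symc_comm by simp
  have st: "pauli2 s * pauli2 t = pauli2 t * pauli2 s" using Scomm sS t by blast
  have trs: "(\<Sum>i<4. pauli2 s $$ (i,i)) = 0" using P2tr[OF sb] P2c unfolding tr_def by simp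
  have trc: "(\<Sum>i<4. pauli2 c $$ (i,i)) = 0" using P2tr[OF cb] P2c unfolding tr_def by simp
  have trsc: "(\<Sum>i<4. (pauli2 s * pauli2 c) $$ (i,i)) = 0"
    using P2tr2[OF sb(1,2) cb(1,2)] c(2) P2c unfolding tr_def by simp
  have ob: "orthonormal_basis4 b" using bas common_eigenbasis_def by blast
  have eb: "\<forall>j<4. eigenvector_of (pauli2 s) (b j) \<and> eigenvector_of (pauli2 c) (b j)"
    using bas sS c unfolding common_eigenbasis_def by blast
  have "(\<Sum>j<4. (cmod (braket (b j) \<psi>)) ^ 4) = 1/2"
    by (rule mainM[OF herm_P2 herm_P2 herm_P2 P2sq P2sq P2sq st ct trs trc trsc ob eb u])
       (use pe sS t in auto)
  hence "collision_entropy b \<psi> = - log 2 (1/2)" unfolding collision_entropy_def by (simp only:)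
  also have "log 2 (1/2::real) = - log 2 2" by (rule log_recip)
  finally show ?thesis by simp
qed

theorem theorem6:
  fixes C :: "nat \<Rightarrow> (nat \<times> nat) set" and S :: "(nat \<times> nat) set"
    and B :: "nat \<Rightarrow> nat \<Rightarrow> complex vec" and \<psi> :: "complex vec"
  assumes classes: "\<forall>i\<in>{1,2,3::nat}. max_commuting_class (C i)"
    and disjoint: "\<forall>i\<in>{1,2,3::nat}. \<forall>j\<in>{1,2,3::nat}. i \<noteq> j \<longrightarrow> C i \<inter> C j = {}"
    and S_class: "max_commuting_class S"
    and S_one_each: "\<forall>i\<in>{1,2,3::nat}. card (S \<inter> C i) = 1"
    and bases: "\<forall>i\<in>{1,2,3::nat}. common_eigenbasis (C i) (B i)"
    and psi_unit: "unit_vec4 \<psi>"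
    and psi_eig: "\<forall>p\<in>S. eigenvector_of (pauli2 p) \<psi>"
  shows "(1/3) * (\<Sum>i\<in>{1,2,3::nat}. collision_entropy (B i) \<psi>) = 1"
  proof -
  have "\<forall>i\<in>{1,2,3::nat}. collision_entropy (B i) \<psi> = 1"
    using per_class classes S_class S_one_each bases psi_unit psi_eig by blast
  thus ?thesis by simp
qed

end
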